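(* For every integer $s\geq1$, \[ \sum_{n_1\geq\cdots\geq n_s\geq n_{s+1}\geq2}\frac{1}{n_1(n_1-1)\cdots n_s(n_s-1)\,n_{s+1}}\leq\frac{1}{2^{s+1}}\prod_{l\geq3}\frac{1}{1-\frac{2}{l(l-1)}}+\zeta^{\star}(\{2\}^s,1)-\zeta^{\star}(\{2\}^s). \]
   Context: $\zeta^{\star}(k_1,\ldots,k_r)=\sum_{n_1\geq\cdots\geq n_r\geq 1}\frac{1}{n_1^{k_1}\cdots n_r^{k_r}}$ for $k_1\geq2$, $k_2,\ldots,k_r\geq1$; $\{2\}^s$ denotes $s$ consecutive arguments equal to $2$. *)

theory Defs
  imports "HOL-Analysis.Analysis"
begin

text \<open>Admissible (convergent) when k_1 \<ge> 2 and all k_i \<ge> 1.\<close>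

definition zeta_star_dom :: "nat \<Rightarrow> nat list set" where
  "zeta_star_dom r = {ns. length ns = r \<and> sorted_wrt (\<ge>) ns \<and> (\<forall>n\<in>set ns. n \<ge> 1)}"

definition zeta_star :: "nat list \<Rightarrow> real" where
  "zeta_star ks = (\<Sum>\<^sub>\<infinity> ns \<in> zeta_star_dom (length ks).
      \<Prod>i<length ks. 1 / (real (ns ! i)) ^ (ks ! i))"

end

theory Submission
  imports Defs "HOL-Real_Asymp.Real_Asymp"
begin


definition Ls :: "nat \<Rightarrow> nat \<Rightarrow> nat list set" where
  "Ls k m = {ns. length ns = k \<and> sorted_wrt (\<ge>) ns \<and> (\<forall>x\<in>set ns. m \<le> x)}"

definition G :: "(nat \<Rightarrow> real) \<Rightarrow> nat \<Rightarrow> nat \<Rightarrow> ennreal" where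
  "G f k m = (\<Sum>\<^sub>\<infinity> xs\<in>Ls k m. ennreal (\<Prod>i<k. f (xs!i)))"

lemma enn_summable[simp]: "(f::'a \<Rightarrow> ennreal) summable_on A"
  by (rule nonneg_summable_on_complete) simp

lemma enn_mono_set:
  fixes f :: "'a \<Rightarrow> ennreal"
  assumes "A \<subseteq> B"
  shows "infsum f A \<le> infsum f B"
  using assms by (intro infsum_mono_neutral) auto

lemma enn_Sigma_finite:
  fixes f :: "'a \<times> 'b \<Rightarrow> ennreal"
  assumes "finite F"
  shows "infsum f (Sigma F B) = (\<Sum>x\<in>F. infsum (\<lambda>y. f (x,y)) (B x))"
  using assms
proof (induction F rule: finite_induct)
  case empty
  then show ?case by simp
next
  case (insert x F)
  have eq: "Sigma (insert x F) B = Pair x ` B x \<union> Sigma F B" by auto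
  have "infsum f (Sigma (insert x F) B) = infsum f (Pair x ` B x) + infsum f (Sigma F B)"
    unfolding eq using insert.hyps by (intro infsum_Un_disjoint) auto
  also have "infsum f (Pair x ` B x) = infsum (\<lambda>y. f (x,y)) (B x)"
    by (subst infsum_reindex) (auto simp: inj_on_def o_def)
  finally show ?case using insert by simp
qed

lemma enn_Sigma:
  fixes f :: "'a \<times> 'b \<Rightarrow> ennreal"
  shows "infsum f (Sigma A B) = infsum (\<lambda>x. infsum (\<lambda>y. f (x,y)) (B x)) A"
proof (rule antisym)
  show "infsum f (Sigma A B) \<le> infsum (\<lambda>x. infsum (\<lambda>y. f (x,y)) (B x)) A"
  proof (rule infsum_le_finite_sums)
    fix H assume H: "finite H" "H \<subseteq> Sigma A B"
    have "sum f H = infsum f H" using H by simp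
    also have "\<dots> \<le> infsum f (Sigma (fst ` H) B)"
      using H by (intro enn_mono_set) force
    also have "\<dots> = (\<Sum>x\<in>fst ` H. infsum (\<lambda>y. f (x,y)) (B x))"
      using H by (intro enn_Sigma_finite) auto
    also have "\<dots> = infsum (\<lambda>x. infsum (\<lambda>y. f (x,y)) (B x)) (fst ` H)"
      using H by simp
    also have "\<dots> \<le> infsum (\<lambda>x. infsum (\<lambda>y. f (x,y)) (B x)) A"
      using H by (intro enn_mono_set) force
    finally show "sum f H \<le> infsum (\<lambda>x. infsum (\<lambda>y. f (x,y)) (B x)) A" .
  qed simp
  show "infsum (\<lambda>x. infsum (\<lambda>y. f (x,y)) (B x)) A \<le> infsum f (Sigma A B)"
  proof (rule infsum_le_finite_sums)
    fix F assume F: "finite F" "F \<subseteq> A"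
    have "(\<Sum>x\<in>F. infsum (\<lambda>y. f (x,y)) (B x)) = infsum f (Sigma F B)"
      using F by (simp add: enn_Sigma_finite)
    also have "\<dots> \<le> infsum f (Sigma A B)"
      using F by (intro enn_mono_set) auto
    finally show "(\<Sum>x\<in>F. infsum (\<lambda>y. f (x,y)) (B x)) \<le> infsum f (Sigma A B)" .
  qed simp
qed

lemma enn_cmult:
  fixes f :: "'a \<Rightarrow> ennreal"
  shows "infsum (\<lambda>x. c * f x) A = c * infsum f A"
proof -
  have "infsum (\<lambda>x. c * f x) A = (SUP F\<in>{F. finite F \<and> F\<subseteq>A}. sum (\<lambda>x. c * f x) F)"
    by (rule nonneg_infsum_complete) simp
  also have "\<dots> = (SUP F\<in>{F. finite F \<and> F\<subseteq>A}. c * sum f F)"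
    by (simp add: sum_distrib_left)
  also have "\<dots> = c * (SUP F\<in>{F. finite F \<and> F\<subseteq>A}. sum f F)"
    by (simp add: SUP_mult_left_ennreal)
  also have "(SUP F\<in>{F. finite F \<and> F\<subseteq>A}. sum f F) = infsum f A"
    by (rule nonneg_infsum_complete[symmetric]) simp
  finally show ?thesis .
qed

lemma enn_sum_infsum:
  fixes f :: "'i \<Rightarrow> 'a \<Rightarrow> ennreal"
  shows "(\<Sum>k\<in>K. infsum (f k) A) = infsum (\<lambda>x. \<Sum>k\<in>K. f k x) A"
proof (induction K rule: infinite_finite_induct)
  case (insert k K)
  then show ?case by (simp add: infsum_add)
qed auto

lemma enn_split_first:
  fixes f :: "nat \<Rightarrow> ennreal"
  shows "infsum f {m..} = f m + infsum f {Suc m..}"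
proof -
  have "{m..} = insert m {Suc m..}" by auto
  then show ?thesis by (simp add: infsum_insert)
qed

lemma Ls_decomp_bij:
  "bij_betw (\<lambda>(n,xs). xs @ [n]) (Sigma {m..} (\<lambda>n. Ls k n)) (Ls (Suc k) m)"
proof (rule bij_betwI')
  show "\<And>x y. x \<in> Sigma {m..} (Ls k) \<Longrightarrow> y \<in> Sigma {m..} (Ls k) \<Longrightarrow>
      ((case x of (n, xs) \<Rightarrow> xs @ [n]) = (case y of (n, xs) \<Rightarrow> xs @ [n])) = (x = y)"
    by auto
  show "\<And>x. x \<in> Sigma {m..} (Ls k) \<Longrightarrow> (case x of (n, xs) \<Rightarrow> xs @ [n]) \<in> Ls (Suc k) m"
    by (fastforce simp: Ls_def sorted_wrt_append)
  show "\<exists>x\<in>Sigma {m..} (Ls k). y = (case x of (n, xs) \<Rightarrow> xs @ [n])" if "y \<in> Ls (Suc k) m" for y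
  proof -
    from that have y: "length y = Suc k" "sorted_wrt (\<ge>) y" "\<forall>x\<in>set y. m \<le> x"
      by (auto simp: Ls_def)
    then have ne: "y \<noteq> []" by auto
    have eq: "y = butlast y @ [last y]" using ne by simp
    have "sorted_wrt (\<ge>) (butlast y @ [last y])" using y eq by simp
    then have "sorted_wrt (\<ge>) (butlast y)" "\<forall>x\<in>set (butlast y). last y \<le> x"
      by (auto simp: sorted_wrt_append)
    moreover have "m \<le> last y" using y ne by auto
    ultimately have "(last y, butlast y) \<in> Sigma {m..} (Ls k)"
      using y by (auto simp: Ls_def)
    then show ?thesis using eq by force
  qed
qed

lemma Ls_decomp:
  fixes F :: "nat list \<Rightarrow> ennreal"
  shows "infsum F (Ls (Suc k) m) = (\<Sum>\<^sub>\<infinity> n\<in>{m..}. \<Sum>\<^sub>\<infinity> xs\<in>Ls k n. F (xs @ [n]))"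
proof -
  have "infsum F (Ls (Suc k) m) = infsum (\<lambda>p. F ((\<lambda>(n,xs). xs @ [n]) p)) (Sigma {m..} (\<lambda>n. Ls k n))"
    by (rule infsum_reindex_bij_betw[OF Ls_decomp_bij, symmetric])
  also have "\<dots> = (\<Sum>\<^sub>\<infinity> n\<in>{m..}. \<Sum>\<^sub>\<infinity> xs\<in>Ls k n. F (xs @ [n]))"
    by (subst enn_Sigma) simp
  finally show ?thesis .
qed

lemma last_weight:
  assumes f: "\<And>n. f n \<ge> 0" and g: "\<And>n. g n \<ge> 0"
  shows "(\<Sum>\<^sub>\<infinity> ns\<in>Ls (Suc k) m. ennreal ((\<Prod>i<k. f (ns!i)) * g (ns!k)))
       = (\<Sum>\<^sub>\<infinity> n\<in>{m..}. ennreal (g n) * G f k n)"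
proof -
  have "(\<Sum>\<^sub>\<infinity> ns\<in>Ls (Suc k) m. ennreal ((\<Prod>i<k. f (ns!i)) * g (ns!k)))
     = (\<Sum>\<^sub>\<infinity> n\<in>{m..}. \<Sum>\<^sub>\<infinity> xs\<in>Ls k n. ennreal ((\<Prod>i<k. f ((xs@[n])!i)) * g ((xs@[n])!k)))"
    by (rule Ls_decomp)
  also have "\<dots> = (\<Sum>\<^sub>\<infinity> n\<in>{m..}. \<Sum>\<^sub>\<infinity> xs\<in>Ls k n. ennreal (g n) * ennreal (\<Prod>i<k. f (xs!i)))"
  proof (intro infsum_cong)
    fix n xs assume "xs \<in> Ls k n"
    then have "length xs = k" by (simp add: Ls_def)
    then show "ennreal ((\<Prod>i<k. f ((xs@[n])!i)) * g ((xs@[n])!k)) = ennreal (g n) * ennreal (\<Prod>i<k. f (xs!i))"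
      using f g by (simp add: nth_append ennreal_mult' prod_nonneg mult.commute)
  qed
  also have "\<dots> = (\<Sum>\<^sub>\<infinity> n\<in>{m..}. ennreal (g n) * G f k n)"
    by (simp add: enn_cmult G_def)
  finally show ?thesis .
qed

lemma G_Suc:
  assumes f: "\<And>n. f n \<ge> 0"
  shows "G f (Suc k) m = (\<Sum>\<^sub>\<infinity> n\<in>{m..}. ennreal (f n) * G f k n)"
proof -
  have "G f (Suc k) m = (\<Sum>\<^sub>\<infinity> ns\<in>Ls (Suc k) m. ennreal ((\<Prod>i<k. f (ns!i)) * f (ns!k)))"
    by (simp add: G_def)
  also have "\<dots> = (\<Sum>\<^sub>\<infinity> n\<in>{m..}. ennreal (f n) * G f k n)"
    by (rule last_weight[OF f f])
  finally show ?thesis .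
qed

lemma G_0: "G f 0 m = 1"
proof -
  have "Ls 0 m = {[]}" by (auto simp: Ls_def)
  then show ?thesis by (simp add: G_def)
qed


lemma tele_bound:
  fixes g t :: "nat \<Rightarrow> real"
  assumes g0: "\<And>n. n \<ge> m \<Longrightarrow> 0 \<le> g n"
    and gt: "\<And>n. n \<ge> m \<Longrightarrow> g n \<le> t n - t (Suc n)"
    and t0: "\<And>n. n \<ge> m \<Longrightarrow> 0 \<le> t n"
  shows "(\<Sum>\<^sub>\<infinity>n\<in>{m..}. ennreal (g n)) \<le> ennreal (t m)"
proof (rule infsum_le_finite_sums)
  have partial: "(\<Sum>n\<in>{m..<m+N}. g n) \<le> t m - t (m+N)" for N
  proof (induction N)
    case 0 then show ?case by simp
  next
    case (Suc N)
    have "(\<Sum>n\<in>{m..<m+Suc N}. g n) = (\<Sum>n\<in>{m..<m+N}. g n) + g (m+N)" by simp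
    also have "\<dots> \<le> t m - t (m+N) + (t (m+N) - t (Suc (m+N)))"
      using Suc gt[of "m+N"] by simp
    finally show ?case by simp
  qed
  fix F assume F: "finite F" "F \<subseteq> {m..}"
  define N where "N = Suc (Max (insert 0 F))"
  have sub: "F \<subseteq> {m..<m+N}"
  proof
    fix x assume "x \<in> F"
    then have "x \<le> Max (insert 0 F)" using F by simp
    then have "x < m + N" by (simp add: N_def)
    then show "x \<in> {m..<m+N}" using F \<open>x \<in> F\<close> by auto
  qed
  have "sum (\<lambda>n. ennreal (g n)) F \<le> sum (\<lambda>n. ennreal (g n)) {m..<m+N}"
    by (rule sum_mono2) (use sub in auto)
  also have "\<dots> = ennreal (\<Sum>n\<in>{m..<m+N}. g n)"
    using g0 by (intro sum_ennreal) auto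
  also have "\<dots> \<le> ennreal (t m)"
    using partial[of N] t0[of "m+N"] by (intro ennreal_leI) simp
  finally show "sum (\<lambda>n. ennreal (g n)) F \<le> ennreal (t m)" .
qed simp


lemma aa_real: fixes x :: real assumes "x \<ge> 3"
  shows "2 * (1 / (x * (x - 1))) * (x / (x - 2)) = 2 / (x - 2) - 2 / (x - 1)"
proof -
  have h: "x - 2 \<noteq> 0" "x - 1 \<noteq> 0" "x \<noteq> 0" using assms by auto
  have "2 * (1 / (x * (x - 1))) * (x / (x - 2)) = 2 / ((x - 1) * (x - 2))"
    using h by (simp add: divide_simps)
  also have "\<dots> = 2 / (x - 2) - 2 / (x - 1)"
    using h by (simp add: divide_simps)
  finally show ?thesis .
qed
lemma bb_real: fixes x :: real assumes "x \<ge> 1"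
  shows "1 / x^2 \<le> 2 / x - 2 / (x + 1)"
proof -
  have "2 / x - 2 / (x + 1) = 2 / (x * (x + 1))" using assms by (simp add: divide_simps)
  moreover have "1 / x^2 = 2 / (2 * x^2)" by simp
  moreover have "2 / (2 * x^2) \<le> 2 / (x * (x + 1))"
  proof (rule divide_left_mono)
    have "x * (x + 1) \<le> x * (2 * x)" using assms by (intro mult_left_mono) auto
    then show "x * (x + 1) \<le> 2 * x^2" by (simp add: power2_eq_square)
    show "0 < 2 * x^2 * (x * (x + 1))" using assms by simp
  qed simp
  ultimately show ?thesis by simp
qed

definition aa :: "nat \<Rightarrow> real" where "aa n = 1 / (real n * (real n - 1))"
definition bb :: "nat \<Rightarrow> real" where "bb n = 1 / (real n)^2"
definition ww :: "nat \<Rightarrow> real" where "ww n = 1 / real n"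

lemma aa_nonneg: "aa n \<ge> 0"
  by (cases n) (auto simp: aa_def)
lemma bb_nonneg: "bb n \<ge> 0" by (simp add: bb_def)
lemma ww_nonneg: "ww n \<ge> 0" by (simp add: ww_def)

lemma aa_tele:
  assumes "m \<ge> 3"
  shows "(\<Sum>\<^sub>\<infinity>n\<in>{m..}. ennreal (2 * aa n * (real n / (real n - 2)))) \<le> ennreal (2 / (real m - 2))"
proof (rule tele_bound)
  fix n assume n: "m \<le> n"
  then have n3: "real n \<ge> 3" using assms by linarith
  show "0 \<le> 2 * aa n * (real n / (real n - 2))" using n3 aa_nonneg by simp
  show "0 \<le> 2 / (real n - 2)" using n3 by simp
  show "2 * aa n * (real n / (real n - 2)) \<le> 2 / (real n - 2) - 2 / (real (Suc n) - 2)"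
    using aa_real[OF n3] by (simp add: aa_def)
qed

lemma bb_tele:
  assumes "m \<ge> 1"
  shows "(\<Sum>\<^sub>\<infinity>n\<in>{m..}. ennreal (bb n)) \<le> ennreal (2 / real m)"
proof (rule tele_bound)
  fix n assume n: "m \<le> n"
  then have n1: "real n \<ge> 1" using assms by linarith
  show "0 \<le> bb n" by (rule bb_nonneg)
  show "0 \<le> 2 / real n" by simp
  show "bb n \<le> 2 / real n - 2 / real (Suc n)"
    using bb_real[OF n1] by (simp add: bb_def add.commute)
qed


lemma A_bound:
  assumes "m \<ge> 3"
  shows "(\<Sum>k\<le>K. 2^k * G aa k m) \<le> ennreal (real m / (real m - 2))"
  using assms
proof (induction K arbitrary: m)
  case 0
  have "1 \<le> real m / (real m - 2)" using 0 by (simp add: field_simps)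
  then have "ennreal 1 \<le> ennreal (real m / (real m - 2))" by (rule ennreal_leI)
  then show ?case by (simp add: G_0)
next
  case (Suc K)
  have m3: "real m \<ge> 3" using Suc.prems by simp
  have "(\<Sum>k\<le>Suc K. 2^k * G aa k m) = 1 + (\<Sum>k\<le>K. 2^(Suc k) * G aa (Suc k) m)"
    by (simp only: sum.atMost_Suc_shift) (simp add: G_0)
  also have "(\<Sum>k\<le>K. 2^(Suc k) * G aa (Suc k) m)
      = (\<Sum>k\<le>K. \<Sum>\<^sub>\<infinity>n\<in>{m..}. ennreal (2 * aa n) * (2^k * G aa k n))"
  proof (rule sum.cong)
    fix k assume "k \<in> {..K}"
    have "2^(Suc k) * G aa (Suc k) m = 2^(Suc k) * (\<Sum>\<^sub>\<infinity>n\<in>{m..}. ennreal (aa n) * G aa k n)"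
      by (simp add: G_Suc aa_nonneg)
    also have "\<dots> = (\<Sum>\<^sub>\<infinity>n\<in>{m..}. 2^(Suc k) * (ennreal (aa n) * G aa k n))"
      by (simp add: enn_cmult)
    also have "\<dots> = (\<Sum>\<^sub>\<infinity>n\<in>{m..}. ennreal (2 * aa n) * (2^k * G aa k n))"
      by (intro infsum_cong) (simp add: ennreal_mult' aa_nonneg mult_ac)
    finally show "2^(Suc k) * G aa (Suc k) m = (\<Sum>\<^sub>\<infinity>n\<in>{m..}. ennreal (2 * aa n) * (2^k * G aa k n))" .
  qed simp
  also have "\<dots> = (\<Sum>\<^sub>\<infinity>n\<in>{m..}. ennreal (2 * aa n) * (\<Sum>k\<le>K. 2^k * G aa k n))"
    by (simp add: enn_sum_infsum sum_distrib_left)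
  also have "\<dots> \<le> (\<Sum>\<^sub>\<infinity>n\<in>{m..}. ennreal (2 * aa n) * ennreal (real n / (real n - 2)))"
    using Suc by (intro infsum_mono mult_left_mono) auto
  also have "\<dots> = (\<Sum>\<^sub>\<infinity>n\<in>{m..}. ennreal (2 * aa n * (real n / (real n - 2))))"
  proof (intro infsum_cong)
    fix n assume "n \<in> {m..}"
    then have "0 \<le> real n / (real n - 2)" using m3 by auto
    then show "ennreal (2 * aa n) * ennreal (real n / (real n - 2)) = ennreal (2 * aa n * (real n / (real n - 2)))"
      by (intro ennreal_mult[symmetric]) (use aa_nonneg in auto)
  qed
  also have "\<dots> \<le> ennreal (2 / (real m - 2))"
    by (rule aa_tele[OF Suc.prems])
  finally have "(\<Sum>k\<le>Suc K. 2^k * G aa k m) \<le> 1 + ennreal (2 / (real m - 2))"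
    by (simp add: add_left_mono)
  also have "\<dots> = ennreal (1 + 2 / (real m - 2))"
  proof -
    have "ennreal (1 + 2 / (real m - 2)) = ennreal 1 + ennreal (2 / (real m - 2))"
      by (rule ennreal_plus) (use m3 in auto)
    then show ?thesis by simp
  qed
  also have "1 + 2 / (real m - 2) = real m / (real m - 2)"
    using m3 by (simp add: field_simps)
  finally show ?case .
qed

lemma G2_step: "G aa (Suc k) 2 = ennreal (1/2) * G aa k 2 + G aa (Suc k) 3"
proof -
  have "G aa (Suc k) 2 = (\<Sum>\<^sub>\<infinity>n\<in>{2..}. ennreal (aa n) * G aa k n)"
    by (simp add: G_Suc aa_nonneg)
  also have "\<dots> = ennreal (aa 2) * G aa k 2 + (\<Sum>\<^sub>\<infinity>n\<in>{Suc 2..}. ennreal (aa n) * G aa k n)"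
    by (rule enn_split_first)
  also have "(\<Sum>\<^sub>\<infinity>n\<in>{Suc 2..}. ennreal (aa n) * G aa k n) = G aa (Suc k) 3"
    by (simp add: G_Suc aa_nonneg numeral_3_eq_3)
  moreover have "aa 2 = 1/2" by (simp add: aa_def)
  ultimately show ?thesis by simp
qed

lemma G2_sum: "2^s * G aa s 2 = (\<Sum>k\<le>s. 2^k * G aa k 3)"
proof (induction s)
  case 0
  then show ?case by (simp add: G_0)
next
  case (Suc s)
  have "2^(Suc s) * G aa (Suc s) 2 = 2^(Suc s) * ennreal (1/2) * G aa s 2 + 2^(Suc s) * G aa (Suc s) 3"
    by (simp add: G2_step distrib_left mult.assoc)
  also have "2^(Suc s) * ennreal (1/2) = (2::ennreal)^s"
  proof -
    have "(2::ennreal)^(Suc s) * ennreal (1/2) = 2^s * (2 * ennreal (1/2))" by (simp add: mult_ac)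
    also have "2 * ennreal (1/2) = 1"
    proof -
      have "ennreal (2 * (1/2)) = ennreal 2 * ennreal (1/2)" by (rule ennreal_mult) auto
      then show ?thesis by simp
    qed
    finally show ?thesis by simp
  qed
  finally show ?case using Suc by simp
qed

lemma G2_bound: "ennreal (1/2) * G aa s 2 \<le> ennreal (3 / 2^(s+1))"
proof -
  have "ennreal (1 / 2^(s+1) * 2^s) = ennreal (1 / 2^(s+1)) * ennreal (2^s)"
    by (rule ennreal_mult) auto
  moreover have "(1::real) / 2^(s+1) * 2^s = 1/2" by simp
  moreover have "ennreal ((2::real)^s) = 2^s" by (metis ennreal_numeral ennreal_power zero_le_numeral)
  ultimately have "ennreal (1/2) = ennreal (1 / 2^(s+1)) * 2^s" by metis
  then have "ennreal (1/2) * G aa s 2 = ennreal (1 / 2^(s+1)) * (2^s * G aa s 2)"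
    by (simp add: mult.assoc)
  also have "\<dots> = ennreal (1 / 2^(s+1)) * (\<Sum>k\<le>s. 2^k * G aa k 3)"
    by (simp add: G2_sum)
  also have "\<dots> \<le> ennreal (1 / 2^(s+1)) * ennreal 3"
    using A_bound[of 3 s] by (intro mult_left_mono) auto
  also have "\<dots> = ennreal (3 / 2^(s+1))"
  proof -
    have "ennreal (1 / 2^(s+1) * 3) = ennreal (1 / 2^(s+1)) * ennreal 3" by (rule ennreal_mult) auto
    then show ?thesis by simp
  qed
  finally show ?thesis .
qed


lemma map_Suc_bij: "bij_betw (map Suc) (Ls s m) (Ls s (Suc m))"
proof (rule bij_betwI[where g="map (\<lambda>x. x - 1)"])
  show "map Suc \<in> Ls s m \<rightarrow> Ls s (Suc m)"
    by (auto simp: Ls_def sorted_wrt_map)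
  show "map (\<lambda>x. x - 1) \<in> Ls s (Suc m) \<rightarrow> Ls s m"
  proof
    fix xs assume xs: "xs \<in> Ls s (Suc m)"
    then have "sorted_wrt (\<ge>) xs" "\<forall>x\<in>set xs. Suc m \<le> x" "length xs = s" by (auto simp: Ls_def)
    then show "map (\<lambda>x. x - 1) xs \<in> Ls s m"
      unfolding Ls_def by (auto simp: sorted_wrt_map elim!: sorted_wrt_mono_rel[rotated])
  qed
  show "\<And>x. x \<in> Ls s m \<Longrightarrow> map (\<lambda>x. x - 1) (map Suc x) = x"
    by (simp add: map_idI)
  show "\<And>y. y \<in> Ls s (Suc m) \<Longrightarrow> map Suc (map (\<lambda>x. x - 1) y) = y"
    by (auto simp: Ls_def intro!: map_idI)
qed

lemma aa_Suc_le: "n \<ge> 1 \<Longrightarrow> aa (Suc n) \<le> bb n"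
  by (simp add: aa_def bb_def power2_eq_square frac_le)

lemma shift_le:
  assumes "m \<ge> 1"
  shows "G aa s (Suc m) \<le> G bb s m"
proof -
  have "G aa s (Suc m) = (\<Sum>\<^sub>\<infinity>ys\<in>Ls s m. ennreal (\<Prod>i<s. aa (map Suc ys ! i)))"
    unfolding G_def by (rule infsum_reindex_bij_betw[OF map_Suc_bij, symmetric])
  also have "\<dots> \<le> G bb s m"
    unfolding G_def
  proof (rule infsum_mono)
    fix ys assume ys: "ys \<in> Ls s m"
    then have len: "length ys = s" and ge: "\<forall>x\<in>set ys. m \<le> x" by (auto simp: Ls_def)
    have "(\<Prod>i<s. aa (map Suc ys ! i)) \<le> (\<Prod>i<s. bb (ys ! i))"
    proof (rule prod_mono)
      fix i assume "i \<in> {..<s}"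
      then have "ys ! i \<in> set ys" using len by auto
      then have "ys ! i \<ge> 1" using ge assms by auto
      then show "0 \<le> aa (map Suc ys ! i) \<and> aa (map Suc ys ! i) \<le> bb (ys ! i)"
        using \<open>i \<in> {..<s}\<close> len by (simp add: aa_nonneg aa_Suc_le)
    qed
    then show "ennreal (\<Prod>i<s. aa (map Suc ys ! i)) \<le> ennreal (\<Prod>i<s. bb (ys ! i))"
      by (rule ennreal_leI)
  qed simp_all
  finally show ?thesis .
qed

lemma B_step:
  assumes "m \<ge> 1"
  shows "G bb (Suc k) m \<le> 2^k * ennreal (2 / real m)"
proof -
  have B: "G bb k n \<le> 2^k" if "n \<ge> 1" for n
    using that
  proof (induction k arbitrary: n)
    case 0 then show ?case by (simp add: G_0)
  next
    case (Suc k)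
    have "G bb (Suc k) n = (\<Sum>\<^sub>\<infinity>j\<in>{n..}. ennreal (bb j) * G bb k j)"
      by (simp add: G_Suc bb_nonneg)
    also have "\<dots> \<le> (\<Sum>\<^sub>\<infinity>j\<in>{n..}. 2^k * ennreal (bb j))"
      using Suc by (intro infsum_mono) (auto simp: mult.commute intro!: mult_left_mono)
    also have "\<dots> = 2^k * (\<Sum>\<^sub>\<infinity>j\<in>{n..}. ennreal (bb j))" by (rule enn_cmult)
    also have "\<dots> \<le> 2^k * ennreal (2 / real n)"
      using bb_tele[OF Suc.prems] by (rule mult_left_mono) simp
    also have "\<dots> \<le> 2^k * 2"
    proof (rule mult_left_mono)
      have "2 / real n \<le> 2" using Suc.prems by (simp add: field_simps)
      then have "ennreal (2 / real n) \<le> ennreal 2" by (rule ennreal_leI)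
      then show "ennreal (2 / real n) \<le> 2" by simp
    qed simp
    finally show ?case by (simp add: mult.commute)
  qed
  have "G bb (Suc k) m = (\<Sum>\<^sub>\<infinity>j\<in>{m..}. ennreal (bb j) * G bb k j)"
    by (simp add: G_Suc bb_nonneg)
  also have "\<dots> \<le> (\<Sum>\<^sub>\<infinity>j\<in>{m..}. 2^k * ennreal (bb j))"
    using B assms by (intro infsum_mono) (auto simp: mult.commute intro!: mult_left_mono)
  also have "\<dots> = 2^k * (\<Sum>\<^sub>\<infinity>j\<in>{m..}. ennreal (bb j))" by (rule enn_cmult)
  also have "\<dots> \<le> 2^k * ennreal (2 / real m)"
    using bb_tele[OF assms] by (rule mult_left_mono) simp
  finally show ?thesis .
qed

lemma E1_fin:
  "(\<Sum>\<^sub>\<infinity>m\<in>{1..}. ennreal (ww m) * G bb (Suc k) m) < top"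
proof -
  have "(\<Sum>\<^sub>\<infinity>m\<in>{1..}. ennreal (ww m) * G bb (Suc k) m)
      \<le> (\<Sum>\<^sub>\<infinity>m\<in>{1..}. ennreal (ww m) * (2^k * ennreal (2 / real m)))"
    using B_step by (intro infsum_mono mult_left_mono) auto
  also have "\<dots> = (\<Sum>\<^sub>\<infinity>m\<in>{1..}. (2^k * 2) * ennreal (bb m))"
  proof (intro infsum_cong)
    fix m :: nat assume "m \<in> {1..}"
    have "ennreal (ww m) * ennreal (2 / real m) = ennreal (ww m * (2 / real m))"
      by (rule ennreal_mult[symmetric]) (auto simp: ww_def)
    also have "ww m * (2 / real m) = 2 * bb m" by (simp add: ww_def bb_def power2_eq_square)
    also have "ennreal (2 * bb m) = ennreal 2 * ennreal (bb m)" by (rule ennreal_mult) (auto simp: bb_nonneg)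
    finally have X: "ennreal (ww m) * ennreal (2 / real m) = 2 * ennreal (bb m)" by simp
    have "ennreal (ww m) * (2^k * ennreal (2 / real m)) = 2^k * (ennreal (ww m) * ennreal (2 / real m))"
      by (simp only: mult_ac)
    also have "\<dots> = 2^k * (2 * ennreal (bb m))" by (simp only: X)
    also have "\<dots> = (2^k * 2) * ennreal (bb m)" by (simp only: mult_ac)
    finally show "ennreal (ww m) * (2^k * ennreal (2 / real m)) = (2^k * 2) * ennreal (bb m)" .
  qed
  also have "\<dots> = (2^k * 2) * (\<Sum>\<^sub>\<infinity>m\<in>{1..}. ennreal (bb m))" by (rule enn_cmult)
  also have "\<dots> \<le> (2^k * 2) * ennreal (2 / real (1::nat))"
    using bb_tele[of 1] by (intro mult_left_mono) auto
  also have "\<dots> < top" by (simp add: ennreal_mult_less_top power_less_top_ennreal)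
  finally show ?thesis .
qed

lemma real_enn:
  fixes h :: "'a \<Rightarrow> real"
  assumes nn: "\<And>x. x \<in> A \<Longrightarrow> h x \<ge> 0" and fin: "(\<Sum>\<^sub>\<infinity>x\<in>A. ennreal (h x)) < top"
  shows "ennreal (infsum h A) = (\<Sum>\<^sub>\<infinity>x\<in>A. ennreal (h x))"
proof -
  define E where "E = (\<Sum>\<^sub>\<infinity>x\<in>A. ennreal (h x))"
  have sumF: "ennreal (sum h F) = sum (\<lambda>x. ennreal (h x)) F" if "F \<subseteq> A" for F
    using nn that by (subst sum_ennreal) auto
  have bd: "bdd_above (sum h ` {F. F \<subseteq> A \<and> finite F})"
  proof (rule bdd_aboveI)
    fix y assume "y \<in> sum h ` {F. F \<subseteq> A \<and> finite F}"
    then obtain F where F: "F \<subseteq> A" "finite F" "y = sum h F" by auto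
    have "ennreal (sum h F) = infsum (\<lambda>x. ennreal (h x)) F" using F sumF by simp
    also have "\<dots> \<le> E" unfolding E_def using F(1) by (rule enn_mono_set)
    finally have le: "ennreal (sum h F) \<le> E" .
    have "sum h F = enn2real (ennreal (sum h F))" using F nn by (simp add: sum_nonneg subset_iff)
    also have "\<dots> \<le> enn2real E" using le fin by (intro enn2real_mono) (auto simp: E_def)
    finally show "y \<le> enn2real E" using F by simp
  qed
  have summ: "h summable_on A" using nn bd by (rule nonneg_bdd_above_summable_on)
  have "ennreal (infsum h A) = (SUP F\<in>{F. finite F \<and> F \<subseteq> A}. ennreal (sum h F))"
    using summ nn by (rule infsum_nonneg_is_SUPREMUM_ennreal)
  also have "\<dots> = (SUP F\<in>{F. finite F \<and> F \<subseteq> A}. sum (\<lambda>x. ennreal (h x)) F)"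
    using sumF by (intro SUP_cong) auto
  also have "\<dots> = (\<Sum>\<^sub>\<infinity>x\<in>A. ennreal (h x))"
    by (rule nonneg_infsum_complete[symmetric]) simp
  finally show ?thesis .
qed


lemma feq_real: fixes x :: real assumes "x \<ge> 0"
  shows "1 / (1 - 2 / ((x + 3) * (x + 3 - 1))) = (x + 3) * (x + 2) / ((x + 1) * (x + 4))"
proof -
  have p: "(x + 3) * (x + 2) > 0" "(x + 1) * (x + 4) > 0" "x + 3 \<noteq> 0" "x + 2 \<noteq> 0" using assms by auto
  have "1 - 2 / ((x + 3) * (x + 3 - 1)) = (x + 1) * (x + 4) / ((x + 3) * (x + 2))"
  proof -
    have "x + 3 - 1 = x + 2" by simp
    then have "1 - 2 / ((x + 3) * (x + 3 - 1)) = 1 - 2 / ((x + 3) * (x + 2))" by simp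
    also have "\<dots> = ((x + 3) * (x + 2) - 2) / ((x + 3) * (x + 2))"
      using p by (simp add: diff_divide_distrib)
    also have "(x + 3) * (x + 2) - 2 = (x + 1) * (x + 4)" by (simp add: algebra_simps)
    finally show ?thesis .
  qed
  then show ?thesis using p by simp
qed
lemma part_step: fixes x :: real assumes "x \<ge> 0"
  shows "3 * (x + 2) / (x + 4) * ((x + 1 + 3) * (x + 1 + 2) / ((x + 1 + 1) * (x + 1 + 4))) = 3 * (x + 1 + 2) / (x + 1 + 4)"
proof -
  have e: "x + 1 + 3 = x + 4" "x + 1 + 2 = x + 3" "x + 1 + 1 = x + 2" "x + 1 + 4 = x + 5" by simp_all
  have p: "x + 2 \<noteq> 0" "x + 4 \<noteq> 0" "x + 5 \<noteq> 0" using assms by auto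
  have "3 * (x + 2) / (x + 4) * ((x + 4) * (x + 3) / ((x + 2) * (x + 5))) = 3 * (x + 3) / (x + 5)"
    using p by (simp add: divide_simps) (simp add: algebra_simps)
  then show ?thesis unfolding e .
qed

lemma prodinf3: "(\<Prod>l. 1 / (1 - 2 / (real (l + 3) * (real (l + 3) - 1)))) = (3::real)"
proof -
  define f where "f l = 1 / (1 - 2 / (real (l + 3) * (real (l + 3) - 1)))" for l
  have feq: "f l = (real l + 3) * (real l + 2) / ((real l + 1) * (real l + 4))" for l
    unfolding f_def using feq_real[of "real l"] by simp
  have part: "(\<Prod>k\<le>n. f k) = 3 * (real n + 2) / (real n + 4)" for n
  proof (induction n)
    case 0 then show ?case by (simp add: feq)
  next
    case (Suc n)
    then show ?case using part_step[of "real n"] by (simp add: feq)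
  qed
  have "(\<lambda>n. 3 * (real n + 2) / (real n + 4)) \<longlonglongrightarrow> 3" by real_asymp
  then have "(\<lambda>n. \<Prod>k\<le>n. f k) \<longlonglongrightarrow> 3" by (simp add: part)
  then have "(\<Prod>k. f k) = 3" by (rule prodinf_eq_prod_lim) simp
  then show ?thesis by (simp add: f_def)
qed


lemma lhs_set: "{ns :: nat list. length ns = s + 1 \<and> sorted_wrt (\<ge>) ns \<and> ns ! s \<ge> 2} = Ls (Suc s) 2"
proof (intro set_eqI iffI)
  fix ns assume "ns \<in> {ns :: nat list. length ns = s + 1 \<and> sorted_wrt (\<ge>) ns \<and> ns ! s \<ge> 2}"
  then have ns: "length ns = Suc s" "sorted_wrt (\<ge>) ns" "ns ! s \<ge> 2" by auto
  have "2 \<le> x" if "x \<in> set ns" for x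
  proof -
    from that obtain i where i: "i < Suc s" "x = ns ! i" using ns(1) by (auto simp: in_set_conv_nth)
    show ?thesis
    proof (cases "i = s")
      case True then show ?thesis using i ns by simp
    next
      case False
      then have "i < s" using i by simp
      then have "ns ! s \<le> ns ! i" using ns sorted_wrt_nth_less[OF ns(2), of i s] by simp
      then show ?thesis using i ns by simp
    qed
  qed
  then show "ns \<in> Ls (Suc s) 2" using ns by (auto simp: Ls_def)
next
  fix ns assume "ns \<in> Ls (Suc s) 2"
  then show "ns \<in> {ns :: nat list. length ns = s + 1 \<and> sorted_wrt (\<ge>) ns \<and> ns ! s \<ge> 2}"
    by (auto simp: Ls_def)
qed

lemma zeta_dom: "zeta_star_dom r = Ls r 1"
  by (auto simp: zeta_star_dom_def Ls_def)

theorem lemma4p1: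
  fixes s :: nat
  assumes "s \<ge> 1"
  shows "(\<Sum>\<^sub>\<infinity> ns \<in> {ns :: nat list. length ns = s + 1 \<and> sorted_wrt (\<ge>) ns \<and> ns ! s \<ge> 2}.
            ennreal ((\<Prod>i<s. 1 / (real (ns ! i) * (real (ns ! i) - 1))) * (1 / real (ns ! s))))
         \<le> ennreal (1 / 2 ^ (s + 1) * (\<Prod>l. 1 / (1 - 2 / (real (l + 3) * (real (l + 3) - 1))))
                    + zeta_star (replicate s 2 @ [1]) - zeta_star (replicate s 2))"
proof -
  obtain k where sk: "s = Suc k" using assms by (cases s) auto
  define R where "R = (\<Sum>\<^sub>\<infinity>m\<in>{2..}. ennreal (ww m) * G bb s m)"
  have LHS: "(\<Sum>\<^sub>\<infinity> ns \<in> {ns :: nat list. length ns = s + 1 \<and> sorted_wrt (\<ge>) ns \<and> ns ! s \<ge> 2}.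
            ennreal ((\<Prod>i<s. 1 / (real (ns ! i) * (real (ns ! i) - 1))) * (1 / real (ns ! s))))
      = (\<Sum>\<^sub>\<infinity> ns \<in> Ls (Suc s) 2. ennreal ((\<Prod>i<s. aa (ns ! i)) * ww (ns ! s)))"
    unfolding lhs_set by (simp add: aa_def ww_def)
  also have "\<dots> = (\<Sum>\<^sub>\<infinity>m\<in>{2..}. ennreal (ww m) * G aa s m)"
    by (rule last_weight) (auto simp: aa_nonneg ww_nonneg)
  also have "\<dots> = ennreal (ww 2) * G aa s 2 + (\<Sum>\<^sub>\<infinity>m\<in>{Suc 2..}. ennreal (ww m) * G aa s m)"
    by (rule enn_split_first)
  also have "\<dots> \<le> ennreal (3 / 2^(s+1)) + R"
  proof (rule add_mono)
    show "ennreal (ww 2) * G aa s 2 \<le> ennreal (3 / 2^(s+1))"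
      using G2_bound[of s] by (simp add: ww_def)
    have "{Suc 2..} = Suc ` {2..}"
    proof (intro set_eqI iffI)
      fix x :: nat assume "x \<in> {Suc 2..}"
      then have "x = Suc (x - 1)" "x - 1 \<in> {2..}" by auto
      then show "x \<in> Suc ` {2..}" by blast
    qed auto
    then have "(\<Sum>\<^sub>\<infinity>m\<in>{Suc 2..}. ennreal (ww m) * G aa s m)
        = (\<Sum>\<^sub>\<infinity>m\<in>{2..}. ennreal (ww (Suc m)) * G aa s (Suc m))"
      by (simp add: infsum_reindex o_def)
    also have "\<dots> \<le> R"
      unfolding R_def
    proof (rule infsum_mono)
      fix m :: nat assume m: "m \<in> {2..}"
      have "ww (Suc m) \<le> ww m" using m by (simp add: ww_def frac_le)
      then have "ennreal (ww (Suc m)) \<le> ennreal (ww m)" by (rule ennreal_leI)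
      moreover have "G aa s (Suc m) \<le> G bb s m" using m by (intro shift_le) auto
      ultimately show "ennreal (ww (Suc m)) * G aa s (Suc m) \<le> ennreal (ww m) * G bb s m"
        by (rule mult_mono) auto
    qed simp_all
    finally show "(\<Sum>\<^sub>\<infinity>m\<in>{Suc 2..}. ennreal (ww m) * G aa s m) \<le> R" .
  qed
  finally have main: "(\<Sum>\<^sub>\<infinity> ns \<in> {ns :: nat list. length ns = s + 1 \<and> sorted_wrt (\<ge>) ns \<and> ns ! s \<ge> 2}.
            ennreal ((\<Prod>i<s. 1 / (real (ns ! i) * (real (ns ! i) - 1))) * (1 / real (ns ! s))))
      \<le> ennreal (3 / 2^(s+1)) + R" .

  define h1 where "h1 ns = (\<Prod>i<length (replicate s (2::nat) @ [1]). 1 / (real (ns ! i)) ^ ((replicate s 2 @ [1]) ! i))" for ns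
  define h0 where "h0 ns = (\<Prod>i<length (replicate s (2::nat)). 1 / (real (ns ! i)) ^ (replicate s 2 ! i))" for ns
  have Z1: "zeta_star (replicate s 2 @ [1]) = infsum h1 (Ls (Suc s) 1)"
  proof -
    have "zeta_star (replicate s 2 @ [1]) = infsum h1 (Ls (length (replicate s (2::nat) @ [1])) 1)"
      unfolding zeta_star_def zeta_dom h1_def[abs_def] ..
    then show ?thesis by simp
  qed
  have Z0: "zeta_star (replicate s 2) = infsum h0 (Ls s 1)"
  proof -
    have "zeta_star (replicate s 2) = infsum h0 (Ls (length (replicate s (2::nat))) 1)"
      unfolding zeta_star_def zeta_dom h0_def[abs_def] ..
    then show ?thesis by simp
  qed
  have h1_eq: "h1 ns = (\<Prod>i<s. bb (ns ! i)) * ww (ns ! s)" for ns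
  proof -
    have "h1 ns = (\<Prod>i<Suc s. 1 / (real (ns ! i)) ^ ((replicate s 2 @ [1]) ! i))"
      by (simp add: h1_def)
    also have "\<dots> = (\<Prod>i<s. 1 / (real (ns ! i)) ^ ((replicate s 2 @ [1]) ! i)) * (1 / real (ns ! s))"
      by (simp add: nth_append)
    also have "(\<Prod>i<s. 1 / (real (ns ! i)) ^ ((replicate s 2 @ [1]) ! i)) = (\<Prod>i<s. bb (ns ! i))"
      by (intro prod.cong) (auto simp: nth_append bb_def)
    finally show ?thesis by (simp add: ww_def)
  qed
  have h0_eq: "h0 ns = (\<Prod>i<s. bb (ns ! i))" for ns
    unfolding h0_def by (intro prod.cong) (auto simp: bb_def)
  have h1_nn: "h1 ns \<ge> 0" for ns unfolding h1_eq by (simp add: prod_nonneg bb_nonneg ww_nonneg)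
  have h0_nn: "h0 ns \<ge> 0" for ns unfolding h0_eq by (simp add: prod_nonneg bb_nonneg)
  define E1 where "E1 = (\<Sum>\<^sub>\<infinity>ns\<in>Ls (Suc s) 1. ennreal (h1 ns))"
  define E0 where "E0 = (\<Sum>\<^sub>\<infinity>ns\<in>Ls s 1. ennreal (h0 ns))"
  have E1_eq: "E1 = (\<Sum>\<^sub>\<infinity>m\<in>{1..}. ennreal (ww m) * G bb s m)"
    unfolding E1_def h1_eq by (rule last_weight) (auto simp: bb_nonneg ww_nonneg)
  have E0_eq: "E0 = G bb s 1" unfolding E0_def h0_eq G_def ..
  have E1_split: "E1 = E0 + R"
    unfolding E1_eq E0_eq R_def by (subst enn_split_first) (simp add: ww_def numeral_2_eq_2)
  have E1_fin: "E1 < top" unfolding E1_eq sk by (rule E1_fin)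
  have E0_fin: "E0 < top" using E1_fin E1_split by (auto simp: top_unique)
  have R_fin: "R < top" using E1_fin E1_split by (auto simp: top_unique)
  have "ennreal (zeta_star (replicate s 2 @ [1])) = E1"
    unfolding Z1 E1_def by (rule real_enn) (use h1_nn E1_fin E1_def in auto)
  then have z1: "zeta_star (replicate s 2 @ [1]) = enn2real E1"
    by (metis Z1 enn2real_ennreal h1_nn infsum_nonneg)
  have "ennreal (zeta_star (replicate s 2)) = E0"
    unfolding Z0 E0_def by (rule real_enn) (use h0_nn E0_fin E0_def in auto)
  then have z0: "zeta_star (replicate s 2) = enn2real E0"
    by (metis Z0 enn2real_ennreal h0_nn infsum_nonneg)
  have diff: "zeta_star (replicate s 2 @ [1]) - zeta_star (replicate s 2) = enn2real R"
    unfolding z1 z0 E1_split using E0_fin R_fin by (simp add: enn2real_plus)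
  have "ennreal (1 / 2 ^ (s + 1) * (\<Prod>l. 1 / (1 - 2 / (real (l + 3) * (real (l + 3) - 1))))
                    + zeta_star (replicate s 2 @ [1]) - zeta_star (replicate s 2))
      = ennreal (3 / 2^(s+1) + enn2real R)"
    using diff prodinf3 by (simp add: add_diff_eq[symmetric])
  also have "\<dots> = ennreal (3 / 2^(s+1)) + ennreal (enn2real R)"
    by (rule ennreal_plus) auto
  also have "ennreal (enn2real R) = R" using R_fin by (simp add: ennreal_enn2real_if)
  finally show ?thesis using main by simp
qed

end
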